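(* Let $n\ge 2$ be an integer, $p,q\in\mathbb{R}$ with $q>0$, and let $M$ be a real $n\times n$ matrix such that each of the numbers $p, p+q, \dots, p+(n-1)q$ appears exactly $n$ times among the entries of $M$. Set $$r := \frac pq + \frac{n-1}{2},\quad \rho := \frac{n+1}{12},\quad \sigma := nq^2\left(r^2 + \frac{n^2-1}{12}\right).$$ Then: if $r^2 < \rho$: $|\det M| \le \sigma^{n/2}$; if $r^2 = \rho$: $|\det M| \le n^n q^n |r| \rho^{\frac{n-1}{2}} = \sigma^{n/2}$; if $r^2 > \rho$: $|\det M| \le n^n q^n |r| \rho^{\frac{n-1}{2}} < \sigma^{n/2}$. *)

theory Defs
  imports "HOL-Analysis.Analysis"
begin

end

theory Submission
  imports Defs
begin


lemma norm_sq_vec: "(norm (x::real^'n))^2 = (\<Sum>i\<in>UNIV. (x$i)^2)"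
  unfolding power2_norm_eq_inner inner_vec_def by (simp add: power2_eq_square)

lemma det_orth_rows:
  fixes A :: "real^'n^'n"
  assumes orth: "\<And>i j. i \<noteq> j \<Longrightarrow> A$i \<bullet> A$j = 0"
  shows "\<bar>det A\<bar> = (\<Prod>i\<in>UNIV. norm (A$i))"
proof -
  have d: "(A ** transpose A) $ i $ j = (if i = j then (norm (A$i))^2 else 0)" for i j
    using orth[of i j]
    by (auto simp: matrix_matrix_mult_def transpose_def inner_vec_def power2_norm_eq_inner)
  have "det (A ** transpose A) = (\<Prod>i\<in>UNIV. (norm (A$i))^2)"
    by (subst det_diagonal) (simp_all add: d)
  hence "(det A)^2 = (\<Prod>i\<in>UNIV. norm (A$i))^2"
    by (simp add: det_mul power2_eq_square prod.distrib)
  hence "\<bar>det A\<bar>^2 = (\<Prod>i\<in>UNIV. norm (A$i))^2" by simp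
  thus ?thesis
    by (rule power2_eq_imp_eq) (auto intro: prod_nonneg)
qed

lemma gs_exists:
  fixes A :: "real^'n^'n"
  assumes "finite S"
  shows "\<exists>B::real^'n^'n. det B = det A \<and> (\<forall>i. norm (B$i) \<le> norm (A$i)) \<and>
     (\<forall>i\<in>S. \<forall>j\<in>S. i \<noteq> j \<longrightarrow> B$i \<bullet> B$j = 0)"
  using assms
proof (induction S rule: finite_induct)
  case empty
  show ?case by (intro exI[of _ A]) auto
next
  case (insert k S)
  then obtain B :: "real^'n^'n" where B: "det B = det A" "\<forall>i. norm (B$i) \<le> norm (A$i)"
    and orth: "\<forall>i\<in>S. \<forall>j\<in>S. i \<noteq> j \<longrightarrow> B$i \<bullet> B$j = 0" by blast
  define c where "c i = (B$k \<bullet> B$i) / (B$i \<bullet> B$i)" for i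
  define w where "w = (\<Sum>i\<in>S. c i *s B$i)"
  define C :: "real^'n^'n" where "C = (\<chi> l. if l = k then row k B + (- w) else row l B)"
  have rowB: "row l B = B$l" for l by (simp add: row_def vec_eq_iff)
  have "- w \<in> vec.span {row j B |j. j \<noteq> k}"
    unfolding w_def
    by (intro vec.span_neg vec.span_sum vec.span_scale vec.span_base)
       (use insert.hyps rowB in auto)
  hence detC: "det C = det B" unfolding C_def by (rule det_row_span)
  have Ck: "C$k = B$k - w" and Cl: "\<And>l. l \<noteq> k \<Longrightarrow> C$l = B$l"
    by (simp_all add: C_def rowB)
  have ow: "(B$k - w) \<bullet> B$j = 0" if j: "j \<in> S" for j
  proof -
    have "w \<bullet> B$j = (\<Sum>i\<in>S. c i * (B$i \<bullet> B$j))"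
      unfolding w_def by (simp add: inner_sum_left scalar_mult_eq_scaleR)
    also have "\<dots> = (\<Sum>i\<in>S. if i = j then c j * (B$j \<bullet> B$j) else 0)"
      by (rule sum.cong) (use orth j in auto)
    also have "\<dots> = c j * (B$j \<bullet> B$j)" using j insert.hyps by simp
    also have "\<dots> = B$k \<bullet> B$j"
      by (cases "B$j \<bullet> B$j = 0") (auto simp: c_def inner_commute)
    finally show ?thesis by (simp add: inner_diff_left)
  qed
  have "w \<bullet> (B$k - w) = (\<Sum>i\<in>S. c i * (B$i \<bullet> (B$k - w)))"
    by (subst (1) w_def) (simp add: inner_sum_left scalar_mult_eq_scaleR)
  also have "\<dots> = 0" using ow by (simp add: inner_commute)
  finally have "w \<bullet> (B$k - w) = 0" .
  hence "orthogonal (B$k - w) w" by (simp add: orthogonal_def inner_commute)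
  hence "(norm (B$k - w + w))^2 = (norm (B$k - w))^2 + (norm w)^2"
    by (rule norm_add_Pythagorean)
  hence "(norm (B$k - w))^2 \<le> (norm (B$k))^2" by simp
  hence nk: "norm (B$k - w) \<le> norm (B$k)" by (rule power2_le_imp_le) simp
  show ?case
  proof (intro exI[of _ C] conjI allI ballI impI)
    show "det C = det A" using detC B by simp
    fix i show "norm (C$i) \<le> norm (A$i)"
      using B(2) nk by (cases "i = k") (auto simp: Ck Cl intro: order_trans)
  next
    fix i j assume ij: "i \<in> insert k S" "j \<in> insert k S" "i \<noteq> j"
    show "C$i \<bullet> C$j = 0"
    proof (cases "i = k")
      case True
      then show ?thesis using ij ow insert.hyps by (auto simp: Ck Cl)
    next
      case False
      show ?thesis
      proof (cases "j = k")
        case True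
        then show ?thesis using ij ow insert.hyps False
          by (auto simp: Ck Cl inner_commute)
      next
        case False
        then show ?thesis using ij orth \<open>i \<noteq> k\<close> by (auto simp: Cl)
      qed
    qed
  qed
qed

lemma hadamard_rows:
  fixes A :: "real^'n^'n"
  shows "\<bar>det A\<bar> \<le> (\<Prod>i\<in>UNIV. norm (A$i))"
proof -
  obtain B :: "real^'n^'n" where B: "det B = det A" "\<forall>i. norm (B$i) \<le> norm (A$i)"
    "\<forall>i\<in>UNIV. \<forall>j\<in>UNIV. i \<noteq> j \<longrightarrow> B$i \<bullet> B$j = 0"
    using gs_exists[of "UNIV::'n set" A] by auto
  have "\<bar>det A\<bar> = (\<Prod>i\<in>UNIV. norm (B$i))" using det_orth_rows[of B] B by auto
  also have "\<dots> \<le> (\<Prod>i\<in>UNIV. norm (A$i))"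
    by (rule prod_mono) (use B in auto)
  finally show ?thesis .
qed



lemma householder_exists:
  fixes u :: "real^'n" and j0 :: 'n
  assumes nu: "norm u = 1" and uj: "u$j0 \<noteq> 1"
  shows "\<exists>H::real^'n^'n. \<bar>det H\<bar> = 1 \<and> (\<forall>x. norm (H *v x) = norm x) \<and> (\<forall>l. H$j0$l = u$l)"
proof -
  define w :: "real^'n" where "w = axis j0 1 - u"
  have uu: "u \<bullet> u = 1" using nu by (simp add: norm_eq_1)
  have ww: "w \<bullet> w = 2 - 2 * u$j0"
    unfolding w_def by (simp add: inner_diff_left inner_diff_right uu inner_axis axis_nth inner_commute)
  have uj1: "u$j0 \<le> 1" using component_le_norm_cart[of u j0] nu by simp
  have wpos: "w \<bullet> w \<noteq> 0" using ww uj by simp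
  define c where "c = 2 / (w \<bullet> w)"
  define H :: "real^'n^'n" where "H = (\<chi> i j. (if i = j then 1 else 0) - c * w$i * w$j)"
  have Hv: "H *v x = x - (c * (w \<bullet> x)) *\<^sub>R w" for x
  proof -
    have "(H *v x)$i = x$i - c * w$i * (w \<bullet> x)" for i
    proof -
      have "(H *v x)$i = (\<Sum>j\<in>UNIV. (if i = j then x$j else 0) - c * w$i * (w$j * x$j))"
        by (auto simp: H_def matrix_vector_mult_def left_diff_distrib mult.assoc intro!: sum.cong)
      also have "\<dots> = x$i - c * w$i * (w \<bullet> x)"
        by (simp add: sum_subtractf inner_vec_def sum_distrib_left)
      finally show ?thesis .
    qed
    thus ?thesis by (simp add: vec_eq_iff algebra_simps)
  qed
  have nH: "norm (H *v x) = norm x" for x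
  proof -
    have "(norm (H *v x))^2 = (norm x)^2 - 2 * (c * (w \<bullet> x)) * (w \<bullet> x) + (c * (w \<bullet> x))^2 * (w \<bullet> w)"
      unfolding Hv power2_norm_eq_inner
      by (simp add: inner_diff_left inner_diff_right inner_commute algebra_simps power2_eq_square)
    also have "\<dots> = (norm x)^2"
      using wpos by (simp add: c_def power2_eq_square field_simps)
    finally show ?thesis by (simp add: power2_eq_iff_nonneg)
  qed
  have "orthogonal_transformation (\<lambda>x. H *v x)"
    unfolding orthogonal_transformation using nH by (simp add: matrix_vector_mul_linear)
  hence dH: "\<bar>det H\<bar> = 1"
    using orthogonal_transformation_det by (metis matrix_of_matrix_vector_mul)
  have cw: "c * w$j0 = 1"
    using wpos ww by (simp add: c_def w_def axis_nth field_simps)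
  have "H$j0$l = u$l" for l
  proof -
    have "H$j0$l = (if j0 = l then 1 else 0) - (c * w$j0) * w$l" by (simp add: H_def)
    also have "\<dots> = (if j0 = l then 1 else 0) - w$l" using cw by simp
    also have "\<dots> = u$l" by (simp add: w_def axis_def)
    finally show ?thesis .
  qed
  thus ?thesis using dH nH by blast
qed



lemma bern_aux:
  fixes z :: real assumes "0 \<le> z" "z \<le> 1"
  shows "(1 - z)^m * (1 + real m * z) \<le> 1 - (if m \<ge> 1 then z^2 else 0)"
proof (induction m)
  case 0 then show ?case by simp
next
  case (Suc m)
  have a: "0 \<le> (1 - z)^m" using assms by simp
  have "(1 - z)^(Suc m) * (1 + real (Suc m) * z) = (1 - z)^m * (1 + real m * z - (real m + 1) * z^2)"
    by (simp add: algebra_simps power2_eq_square)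
  also have "\<dots> \<le> (1 - z)^m * (1 + real m * z) - (1-z)^m * z^2"
    using a assms by (simp add: algebra_simps mult_left_mono)
  also have "\<dots> \<le> 1 - z^2"
  proof (cases "m \<ge> 1")
    case True
    have "(1 - z)^m * z^2 \<ge> 0" using a by simp
    with Suc.IH True show ?thesis by (simp add: power2_eq_square) 
  next
    case False
    then have "m = 0" by simp
    then show ?thesis by simp
  qed
  finally show ?case by simp
qed

lemma mono_g:
  fixes x y F :: real and m :: nat
  assumes m: "m \<ge> 1" and y: "0 < y" and yx: "y \<le> x" and xF: "x \<le> F" and yF: "y < F" and Fy: "F \<le> (real m + 1) * y"
  shows "x * ((F - x) / m)^m \<le> y * ((F - y) / m)^m"
    and "y < x \<Longrightarrow> x * ((F - x) / m)^m < y * ((F - y) / m)^m"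
proof -
  define t where "t = x - y"
  define D where "D = F - y"
  define z where "z = t / D"
  have D: "D > 0" using yF unfolding D_def by simp
  have t: "t \<ge> 0" "t \<le> D" using yx xF by (auto simp: t_def D_def)
  have z: "0 \<le> z" "z \<le> 1" using t D by (auto simp: z_def)
  have Dm: "D \<le> real m * y" using Fy by (simp add: D_def algebra_simps)
  have ty: "t / y \<le> real m * z"
  proof -
    have "t * D \<le> t * (real m * y)" using Dm t by (simp add: mult_left_mono)
    thus ?thesis using D y by (simp add: z_def field_simps)
  qed
  have Fx: "F - x = D * (1 - z)" using D by (simp add: z_def t_def D_def field_simps)
  have xe: "x = y * (1 + t / y)" using y by (simp add: t_def field_simps)
  have LHS: "x * ((F - x) / m)^m = y * (D / m)^m * ((1 + t / y) * (1 - z)^m)"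
  proof -
    have "(F - x) / m = (D / m) * (1 - z)" by (simp add: Fx)
    hence "((F - x) / m)^m = ((D / m) * (1 - z))^m" by (simp only:)
    hence "((F - x) / m)^m = (D / m)^m * (1 - z)^m" by (simp only: power_mult_distrib)
    hence "x * ((F - x) / m)^m = (y * (1 + t / y)) * ((D / m)^m * (1 - z)^m)" using xe by simp
    thus ?thesis by (simp add: algebra_simps)
  qed
  have RHS: "y * ((F - y) / m)^m = y * (D / m)^m" by (simp add: D_def)
  have pos: "y * (D / m)^m > 0" using y D m by simp
  have b: "(1 - z)^m * (1 + real m * z) \<le> 1 - z^2" using bern_aux[OF z, of m] m by simp
  have "(1 + t / y) * (1 - z)^m \<le> (1 + real m * z) * (1 - z)^m"
    using ty z by (intro mult_right_mono) auto
  also have "\<dots> \<le> 1 - z^2" using b by (simp add: mult.commute)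
  finally have key: "(1 + t / y) * (1 - z)^m \<le> 1 - z^2" .
  show "x * ((F - x) / m)^m \<le> y * ((F - y) / m)^m"
  proof -
    have "(1 + t / y) * (1 - z)^m \<le> 1" using key by (smt (verit) zero_le_power2)
    hence "y * (D / m)^m * ((1 + t / y) * (1 - z)^m) \<le> y * (D / m)^m * 1"
      using pos by (intro mult_left_mono) auto
    thus ?thesis unfolding LHS RHS by simp
  qed
  assume "y < x"
  hence "z > 0" using D by (simp add: z_def t_def)
  hence "(1 + t / y) * (1 - z)^m < 1" using key by (smt (verit) zero_less_power2)
  thus "x * ((F - x) / m)^m < y * ((F - y) / m)^m"
    unfolding LHS RHS using pos mult_strict_left_mono[of "(1 + t / y) * (1 - z)^m" 1 "y * (D / m)^m"]
    by simp
qed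



lemma count_sum:
  fixes M :: "real^'n^'n" and g :: "real \<Rightarrow> real"
  assumes qpos: "q > 0"
    and entries: "\<And>k. k < CARD('n) \<Longrightarrow>
        card {(i, j). M $ i $ j = p + real k * q} = CARD('n)"
  shows "(\<Sum>i\<in>UNIV. \<Sum>j\<in>UNIV. g (M$i$j)) = real CARD('n) * (\<Sum>k<CARD('n). g (p + real k * q))"
proof -
  define n where "n = CARD('n)"
  define E where "E k = {(i, j). M $ i $ j = p + real k * q}" for k
  have disj: "E k \<inter> E k' = {}" if "k \<noteq> k'" for k k'
    using that qpos by (auto simp: E_def)
  have fin: "finite (E k)" for k by simp
  have "card (\<Union>k<n. E k) = (\<Sum>k<n. card (E k))"
    by (rule card_UN_disjoint) (use disj in auto)
  also have "\<dots> = n * n" using entries by (simp add: E_def n_def)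
  also have "\<dots> = card (UNIV :: ('n \<times> 'n) set)"
    by (simp add: n_def UNIV_Times_UNIV[symmetric] card_cartesian_product del: UNIV_Times_UNIV)
  finally have "(\<Union>k<n. E k) = UNIV"
    by (intro card_subset_eq) auto
  have "(\<Sum>i\<in>UNIV. \<Sum>j\<in>UNIV. g (M$i$j)) = (\<Sum>(i,j)\<in>UNIV \<times> UNIV. g (M$i$j))"
    by (rule sum.cartesian_product)
  also have "\<dots> = (\<Sum>(i,j)\<in>(\<Union>k<n. E k). g (M$i$j))"
    using \<open>(\<Union>k<n. E k) = UNIV\<close> by simp
  also have "\<dots> = (\<Sum>k<n. \<Sum>(i,j)\<in>E k. g (M$i$j))"
    by (rule sum.UNION_disjoint) (use disj in auto)
  also have "\<dots> = (\<Sum>k<n. \<Sum>(i,j)\<in>E k. g (p + real k * q))"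
    by (intro sum.cong refl) (auto simp: E_def)
  also have "\<dots> = (\<Sum>k<n. real n * g (p + real k * q))"
    using entries by (intro sum.cong refl) (simp add: E_def n_def case_prod_beta)
  finally show ?thesis by (simp add: n_def sum_distrib_left)
qed

lemma sum_k: "(\<Sum>k<n. real k) = real n * (real n - 1) / 2"
  by (induction n) (auto simp: field_simps)

lemma sum_k2: "(\<Sum>k<n. (real k)^2) = real n * (real n - 1) * (2 * real n - 1) / 6"
  by (induction n) (auto simp: field_simps power2_eq_square)



lemma amgm:
  fixes x :: "'a \<Rightarrow> real"
  assumes "finite S" "card S = m" "m > 0" "\<And>i. i \<in> S \<Longrightarrow> x i \<ge> 0"
  shows "(\<Prod>i\<in>S. x i) \<le> ((\<Sum>i\<in>S. x i) / m)^m"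
proof -
  have ne: "S \<noteq> {}" using assms by auto
  define P where "P = (\<Prod>i\<in>S. x i)"
  have P0: "P \<ge> 0" unfolding P_def using assms by (simp add: prod_nonneg)
  have "P powr (1 / m) \<le> (\<Sum>i\<in>S. x i / m)"
    using arith_geom_mean[OF assms(1) ne, of x] assms by (simp add: P_def)
  also have "\<dots> = (\<Sum>i\<in>S. x i) / m" by (simp add: sum_divide_distrib)
  finally have le: "P powr (1 / m) \<le> (\<Sum>i\<in>S. x i) / m" .
  have "P = (P powr (1 / m))^m"
  proof (cases "P = 0")
    case True then show ?thesis using assms by simp
  next
    case False
    hence "P > 0" using P0 by simp
    hence "(P powr (1 / m))^m = (P powr (1 / m)) powr (real m)"
      by (simp add: powr_realpow)
    also have "\<dots> = P" using assms \<open>P > 0\<close> by (simp add: powr_powr)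
    finally show ?thesis by simp
  qed
  also have "\<dots> \<le> ((\<Sum>i\<in>S. x i) / m)^m"
    by (rule power_mono[OF le]) simp
  finally show ?thesis by (simp add: P_def)
qed

lemma column_mult: "column j (H ** M) = H *v column j (M::real^'n^'n)"
  by (simp add: vec_eq_iff column_def matrix_matrix_mult_def matrix_vector_mult_def)



lemma sq_suc: "((a::real)^(Suc m))^2 = a^2 * (a^2)^m"
proof -
  have "(a^m)^2 = (a^2)^m" by (simp add: power_mult[symmetric] mult.commute)
  thus ?thesis by (simp add: power_mult_distrib)
qed

theorem mainTheorem9:
  fixes M :: "real ^ 'n ^ 'n" and p q :: real
  assumes n2: "CARD('n) \<ge> 2"
    and qpos: "q > 0"
    and entries: "\<And>k. k < CARD('n) \<Longrightarrow>
        card {(i, j). M $ i $ j = p + real k * q} = CARD('n)"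
  shows "let n = CARD('n);
             r = p / q + (real n - 1) / 2;
             \<rho> = (real n + 1) / 12;
             \<sigma> = real n * q\<^sup>2 * (r\<^sup>2 + ((real n)\<^sup>2 - 1) / 12)
         in (r\<^sup>2 < \<rho> \<longrightarrow> \<bar>det M\<bar> \<le> \<sigma> powr (real n / 2))
          \<and> (r\<^sup>2 = \<rho> \<longrightarrow>
               \<bar>det M\<bar> \<le> real n ^ n * q ^ n * \<bar>r\<bar> * \<rho> powr ((real n - 1) / 2)
             \<and> real n ^ n * q ^ n * \<bar>r\<bar> * \<rho> powr ((real n - 1) / 2) = \<sigma> powr (real n / 2))
          \<and> (r\<^sup>2 > \<rho> \<longrightarrow>
               \<bar>det M\<bar> \<le> real n ^ n * q ^ n * \<bar>r\<bar> * \<rho> powr ((real n - 1) / 2)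
             \<and> real n ^ n * q ^ n * \<bar>r\<bar> * \<rho> powr ((real n - 1) / 2) < \<sigma> powr (real n / 2))"
proof -
  define n where "n = CARD('n)"
  define r where "r = p / q + (real n - 1) / 2"
  define \<rho> where "\<rho> = (real n + 1) / 12"
  define \<sigma> where "\<sigma> = real n * q\<^sup>2 * (r\<^sup>2 + ((real n)\<^sup>2 - 1) / 12)"
  define F where "F = (\<Sum>i\<in>UNIV. \<Sum>j\<in>UNIV. (M$i$j)^2)"
  define S where "S = (\<Sum>i\<in>UNIV. \<Sum>j\<in>UNIV. M$i$j)"
  have n2': "n \<ge> 2" using n2 by (simp add: n_def)
  obtain m where nm: "n = Suc m" using n2' by (cases n) auto
  have m1: "m \<ge> 1" using n2' nm by simp
  have rn: "real n \<ge> 2" using n2 by (simp add: n_def)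
  have rm: "real m = real n - 1" using nm by simp
  have p_eq: "p = q * r - q * (real n - 1) / 2" using qpos by (simp add: r_def field_simps)
  have S_eq: "S = real n ^ 2 * q * r"
  proof -
    have "S = real n * (\<Sum>k<n. p + real k * q)"
      using count_sum[OF qpos entries, of "\<lambda>x. x"] by (simp add: S_def n_def)
    also have "(\<Sum>k<n. p + real k * q) = real n * p + q * (\<Sum>k<n. real k)"
      by (simp add: sum.distrib sum_distrib_left mult.commute)
    finally show ?thesis unfolding sum_k p_eq by (simp add: field_simps power2_eq_square)
  qed
  have F_eq: "F = real n * \<sigma>"
  proof -
    have "F = real n * (\<Sum>k<n. (p + real k * q)^2)"
      using count_sum[OF qpos entries, of "\<lambda>x. x^2"] by (simp add: F_def n_def)
    also have "(\<Sum>k<n. (p + real k * q)^2) = real n * p^2 + 2 * p * q * (\<Sum>k<n. real k) + q^2 * (\<Sum>k<n. (real k)^2)"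
      by (simp add: power2_sum sum.distrib sum_distrib_left power_mult_distrib algebra_simps)
    finally show ?thesis unfolding sum_k sum_k2 p_eq \<sigma>_def
      by (simp add: field_simps power2_eq_square)
  qed
  have n4: "(real n)^2 \<ge> 4" using power_mono[OF rn, of 2] by simp
  have \<sigma>pos: "\<sigma> > 0"
  proof -
    have "r\<^sup>2 + ((real n)\<^sup>2 - 1) / 12 > 0" by (intro add_nonneg_pos) (use n4 in auto)
    moreover have "real n * q\<^sup>2 > 0" using rn qpos by simp
    ultimately show ?thesis unfolding \<sigma>_def by (rule mult_pos_pos[rotated])
  qed
  have \<rho>pos: "\<rho> > 0" using rn by (simp add: \<rho>_def)
  have rowsF: "(\<Sum>i\<in>UNIV. (norm (M$i))^2) = F" by (simp add: F_def norm_sq_vec)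
  have hadM: "(det M)^2 \<le> \<sigma>^n"
  proof -
    have "\<bar>det M\<bar> \<le> (\<Prod>i\<in>UNIV. norm (M$i))" by (rule hadamard_rows)
    hence "\<bar>det M\<bar>^2 \<le> (\<Prod>i\<in>UNIV. norm (M$i))^2"
      by (rule power_mono) simp
    also have "\<dots> = (\<Prod>i\<in>UNIV. (norm (M$i))^2)" by (simp add: prod_power_distrib)
    also have "\<dots> \<le> ((\<Sum>i\<in>UNIV. (norm (M$i))^2) / n)^n"
      by (rule amgm) (use nm in \<open>auto simp: n_def\<close>)
    also have "\<dots> = \<sigma>^n" using rowsF F_eq rn by simp
    finally show ?thesis by simp
  qed
  have sq_pow: "(\<sigma> powr (real n / 2))^2 = \<sigma>^n"
  proof -
    have "(\<sigma> powr (real n / 2))^2 = \<sigma> powr (real n / 2) * \<sigma> powr (real n / 2)"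
      by (simp add: power2_eq_square)
    also have "\<dots> = \<sigma> powr (real n)" by (simp add: powr_add[symmetric])
    also have "\<dots> = \<sigma>^n" using \<sigma>pos by (simp add: powr_realpow)
    finally show ?thesis .
  qed
  have case1: "\<bar>det M\<bar> \<le> \<sigma> powr (real n / 2)"
    by (rule power2_le_imp_le) (use hadM sq_pow in auto)
  define B where "B = real n ^ n * q ^ n * \<bar>r\<bar> * \<rho> powr ((real n - 1) / 2)"
  define x0 where "x0 = (real n)^2 * q^2 * r^2"
  define g where "g x = x * ((F - x) / real m)^m" for x
  have B0: "B \<ge> 0" using qpos by (simp add: B_def)
  have Bsq: "B^2 = g x0"
  proof -
    have "(\<rho> powr ((real n - 1) / 2))^2 = \<rho> powr ((real n - 1) / 2) * \<rho> powr ((real n - 1) / 2)"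
      by (simp add: power2_eq_square)
    also have "\<dots> = \<rho> powr (real m)" by (simp add: powr_add[symmetric] rm)
    also have "\<dots> = \<rho>^m" using \<rho>pos by (simp add: powr_realpow)
    finally have rp: "(\<rho> powr ((real n - 1) / 2))^2 = \<rho>^m" .
    have Fx: "(F - x0) / real m = (real n)^2 * q^2 * \<rho>"
    proof -
      have rnm: "real n = real m + 1" using nm by simp
      have "F = (real m + 1) * ((real m + 1) * q\<^sup>2 * (r\<^sup>2 + ((real m + 1)\<^sup>2 - 1) / 12))"
        using F_eq unfolding \<sigma>_def rnm .
      thus ?thesis using m1 unfolding x0_def \<rho>_def rnm
        by (simp add: field_simps power2_eq_square)
    qed
    have "B^2 = (real n ^ n)^2 * (q^n)^2 * r^2 * \<rho>^m"
      by (simp add: B_def power_mult_distrib rp)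
    also have "\<dots> = x0 * ((real n)^2 * q^2 * \<rho>)^m"
      unfolding nm x0_def sq_suc by (simp add: power_mult_distrib)
    finally show ?thesis by (simp add: g_def Fx)
  qed
  have g\<sigma>: "g \<sigma> = \<sigma>^n"
  proof -
    have rnm: "real n = real m + 1" using nm by simp
    have "(F - \<sigma>) / real m = \<sigma>" using F_eq m1 unfolding rnm by (simp add: field_simps)
    thus ?thesis by (simp add: g_def nm)
  qed
  have Fx0: "x0 < F"
  proof -
    have "(real n)^2 * q^2 * r^2 < (real n)^2 * q^2 * (r^2 + ((real n)^2 - 1) / 12)"
      using n4 qpos rn by (intro mult_strict_left_mono) auto
    thus ?thesis by (simp add: x0_def F_eq \<sigma>_def power2_eq_square algebra_simps)
  qed
  have nx0: "r\<^sup>2 \<ge> \<rho> \<Longrightarrow> F \<le> real n * x0"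
  proof -
    assume h: "r\<^sup>2 \<ge> \<rho>"
    have "(real n)^2 * q^2 * (r^2 + ((real n)^2 - 1) / 12) \<le> (real n)^2 * q^2 * (real n * r^2)"
    proof (rule mult_left_mono)
      have "((real n)^2 - 1) / 12 = (real n - 1) * \<rho>" by (simp add: \<rho>_def power2_eq_square field_simps)
      also have "\<dots> \<le> (real n - 1) * r^2" using h rn by (intro mult_left_mono) auto
      finally show "r^2 + ((real n)^2 - 1) / 12 \<le> real n * r^2" by (simp add: algebra_simps)
    qed simp
    thus ?thesis by (simp add: F_eq \<sigma>_def x0_def power2_eq_square algebra_simps)
  qed
  have nx0eq: "x0 = \<sigma>" if h: "r\<^sup>2 = \<rho>"
  proof -
    have hr: "r\<^sup>2 = (real n + 1) / 12" using h by (simp add: \<rho>_def)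
    show ?thesis unfolding x0_def \<sigma>_def hr by (simp add: field_simps power2_eq_square)
  qed
  have nx0gt: "r\<^sup>2 > \<rho> \<Longrightarrow> \<sigma> < x0"
  proof -
    assume h: "r\<^sup>2 > \<rho>"
    have "((real n)^2 - 1) / 12 = (real n - 1) * \<rho>" by (simp add: \<rho>_def power2_eq_square field_simps)
    also have "\<dots> < (real n - 1) * r^2" using h rn by (intro mult_strict_left_mono) auto
    finally have "r^2 + ((real n)^2 - 1) / 12 < real n * r^2" by (simp add: algebra_simps)
    hence "real n * q^2 * (r^2 + ((real n)^2 - 1) / 12) < real n * q^2 * (real n * r^2)"
      using rn qpos by (intro mult_strict_left_mono) auto
    thus ?thesis by (simp add: \<sigma>_def x0_def power2_eq_square algebra_simps)
  qed
  have refined: "\<bar>det M\<bar> \<le> B" if h: "r\<^sup>2 \<ge> \<rho>"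
  proof -
    obtain j0 :: 'n where True by blast
    define u :: "real^'n" where "u = (\<chi> i. 1 / sqrt (real n))"
    have nu: "norm u = 1"
    proof -
      have "(norm u)^2 = 1" using rn by (simp add: norm_sq_vec u_def n_def power_divide)
      thus ?thesis using norm_ge_zero[of u] by (auto simp add: power2_eq_1_iff)
    qed
    have uj: "u$j0 \<noteq> 1" using rn by (simp add: u_def)
    obtain H :: "real^'n^'n" where dH: "\<bar>det H\<bar> = 1" and nH: "\<And>x. norm (H *v x) = norm x"
      and Hj: "\<And>l. H$j0$l = u$l"
      using householder_exists[OF nu uj] by blast
    define A where "A = H ** M"
    have detA: "\<bar>det A\<bar> = \<bar>det M\<bar>" using dH by (simp add: A_def det_mul abs_mult)
    define a2 where "a2 = (norm (A$j0))^2"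
    have sumA: "(\<Sum>i\<in>UNIV. (norm (A$i))^2) = F"
    proof -
      have "(\<Sum>i\<in>UNIV. (norm (A$i))^2) = (\<Sum>i\<in>UNIV. \<Sum>j\<in>UNIV. (A$i$j)^2)"
        by (simp add: norm_sq_vec)
      also have "\<dots> = (\<Sum>j\<in>UNIV. \<Sum>i\<in>UNIV. (A$i$j)^2)"
        by (rule sum.swap)
      also have "\<dots> = (\<Sum>j\<in>UNIV. (norm (column j A))^2)"
        by (simp add: norm_sq_vec column_def)
      also have "\<dots> = (\<Sum>j\<in>UNIV. (norm (column j M))^2)"
        by (simp add: A_def column_mult nH)
      also have "\<dots> = (\<Sum>j\<in>UNIV. \<Sum>i\<in>UNIV. (M$i$j)^2)"
        by (simp add: norm_sq_vec column_def)
      also have "\<dots> = F"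
        unfolding F_def by (rule sum.swap[symmetric])
      finally show ?thesis .
    qed
    have a2x0: "x0 \<le> a2"
    proof -
      define c where "c j = (\<Sum>l\<in>UNIV. M$l$j)" for j
      have Aj: "A$j0$j = c j / sqrt (real n)" for j
        by (simp add: A_def matrix_matrix_mult_def Hj u_def c_def sum_divide_distrib)
      define Q where "Q = (\<Sum>j\<in>UNIV. (c j)^2)"
      have a2e: "a2 = Q / real n"
        using rn by (simp add: a2_def norm_sq_vec Aj power_divide sum_divide_distrib Q_def)
      have "(\<Sum>j\<in>UNIV. c j)^2 \<le> Q * real n"
        using sum_squared_le_sum_of_squares[of c UNIV] by (simp add: n_def Q_def)
      moreover have "(\<Sum>j\<in>UNIV. c j) = S" unfolding c_def S_def by (rule sum.swap)
      ultimately have cs: "S^2 \<le> Q * real n" by simp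
      have "S^2 / (real n)^2 \<le> Q * real n / (real n)^2"
        by (rule divide_right_mono[OF cs]) simp
      also have "\<dots> = a2" using rn by (simp add: a2e power2_eq_square)
      finally have "S^2 / (real n)^2 \<le> a2" .
      thus ?thesis using rn by (simp add: S_eq x0_def power2_eq_square field_simps)
    qed
    define T where "T = (\<Sum>i\<in>UNIV - {j0}. (norm (A$i))^2)"
    have Teq: "T = F - a2"
      using sumA sum.remove[of UNIV j0 "\<lambda>i. (norm (A$i))^2"] by (simp add: T_def a2_def)
    have T0: "T \<ge> 0" unfolding T_def by (simp add: sum_nonneg)
    have "(det M)^2 = \<bar>det A\<bar>^2" using detA by simp
    also have "\<dots> \<le> (\<Prod>i\<in>UNIV. norm (A$i))^2"
      by (rule power_mono[OF hadamard_rows]) simp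
    also have "\<dots> = (\<Prod>i\<in>UNIV. (norm (A$i))^2)" by (simp add: prod_power_distrib)
    also have "\<dots> = a2 * (\<Prod>i\<in>UNIV - {j0}. (norm (A$i))^2)"
      using prod.remove[of UNIV j0 "\<lambda>i. (norm (A$i))^2"] by (simp add: a2_def)
    also have "\<dots> \<le> a2 * (T / real m)^m"
    proof (rule mult_left_mono)
      have cm: "card (UNIV - {j0}) = m" using nm by (simp add: n_def card_Diff_singleton)
      show "(\<Prod>i\<in>UNIV - {j0}. (norm (A$i))^2) \<le> (T / real m)^m"
        unfolding T_def by (rule amgm[OF _ cm]) (use m1 in auto)
    qed (simp add: a2_def)
    also have "\<dots> = g a2" by (simp add: g_def Teq)
    also have "\<dots> \<le> g x0"
      unfolding g_def
    proof (rule mono_g(1)[OF m1])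
      have "r \<noteq> 0" using h \<rho>pos by auto
      thus "0 < x0" using rn qpos by (simp add: x0_def)
      show "x0 \<le> a2" by (rule a2x0)
      show "a2 \<le> F" using Teq T0 by simp
      show "x0 < F" by (rule Fx0)
      show "F \<le> (real m + 1) * x0" using nx0[OF h] rm by simp
    qed
    also have "\<dots> = B^2" using Bsq by simp
    finally have "(det M)^2 \<le> B^2" .
    hence "\<bar>det M\<bar>^2 \<le> B^2" by simp
    thus ?thesis using B0 by (rule power2_le_imp_le)
  qed
  have main: "(r\<^sup>2 < \<rho> \<longrightarrow> \<bar>det M\<bar> \<le> \<sigma> powr (real n / 2))
          \<and> (r\<^sup>2 = \<rho> \<longrightarrow> \<bar>det M\<bar> \<le> B \<and> B = \<sigma> powr (real n / 2))
          \<and> (r\<^sup>2 > \<rho> \<longrightarrow> \<bar>det M\<bar> \<le> B \<and> B < \<sigma> powr (real n / 2))"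
  proof (intro conjI impI)
    show "\<bar>det M\<bar> \<le> \<sigma> powr (real n / 2)" by (rule case1)
  next
    assume h: "r\<^sup>2 = \<rho>"
    show "\<bar>det M\<bar> \<le> B" using refined h by simp
    have "B^2 = (\<sigma> powr (real n / 2))^2" using Bsq nx0eq[OF h] g\<sigma> sq_pow by simp
    thus "B = \<sigma> powr (real n / 2)" using B0 by (rule power2_eq_imp_eq) simp
  next
    assume h: "r\<^sup>2 > \<rho>"
    show "\<bar>det M\<bar> \<le> B" using refined h by simp
    have "g x0 < g \<sigma>"
      unfolding g_def
    proof (rule mono_g(2)[OF m1])
      show "0 < \<sigma>" by (rule \<sigma>pos)
      show "\<sigma> \<le> x0" "\<sigma> < x0" using nx0gt[OF h] by auto
      show "x0 \<le> F" using Fx0 by simp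
      show "\<sigma> < F" using F_eq \<sigma>pos rn by (simp add: algebra_simps)
      show "F \<le> (real m + 1) * \<sigma>" using F_eq rm by simp
    qed
    hence "B^2 < (\<sigma> powr (real n / 2))^2" using Bsq g\<sigma> sq_pow by simp
    thus "B < \<sigma> powr (real n / 2)" by (rule power_less_imp_less_base) simp
  qed
  show ?thesis
    using main unfolding Let_def B_def \<sigma>_def \<rho>_def r_def n_def .
qed


end
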